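(* Let $\mathcal B=(B_1,\dots,B_d)$ be a splitting of order $d$ of a matrix $B_J\in\mathbb R^{n\times n}$, and let $\mathcal S(\mathcal B)=(B_d,B_1,\dots,B_{d-1})$ be its cyclic shift. If $\lambda\neq 0$ is an eigenvalue of the iteration matrix $T(\mathcal B)$ with eigenvector $[\alpha_1^T,\dots,\alpha_d^T]^T$ ($\alpha_p\in\mathbb C^n$), then $\lambda$ is an eigenvalue of $T(\mathcal S(\mathcal B))$ with eigenvector $[\alpha_d^T,\lambda\alpha_1^T,\dots,\lambda\alpha_{d-1}^T]^T$.
   Context: For $B\in\mathbb R^{n\times n}$, a splitting of $B$ of order $d\ge1$ is an ordered $d$-tuple $\mathcal B=(B_1,\dots,B_d)$ of real $n\times n$ matrices with $B_p\neq O$ for all $p$, $\sum_{p=1}^d B_p=B$, and $B_p\circ B_q=O$ (Hadamard product, i.e. the $B_p$ have pairwise disjoint supports) for $p\ne q$. The iteration matrix of $\mathcal B$ is the $dn\times dn$ matrix $T(\mathcal B)=(I_{dn}-\mathcal L)^{-1}\mathcal U$, where $\mathcal L,\mathcal U$ are $d\times d$ block matrices with $n\times n$ blocks, $\mathcal L_{ij}=B_j$ if $i>j$ and $O$ otherwise, $\mathcal U_{ij}=B_j$ if $i\le j$ and $O$ otherwise. (It is the iteration matrix of the scheme $x_i^{(k+1)}=\sum_{j<i}B_jx_j^{(k+1)}+\sum_{j\ge i}B_jx_j^{(k)}+c$, $i=1,\dots,d$.) The cyclic shift of $\mathcal B$ is $\mathcal S(\mathcal B)=(B_d,B_1,\dots,B_{d-1})$.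 *)

theory Defs
  imports "Jordan_Normal_Form.Gauss_Jordan_Elimination" "Jordan_Normal_Form.Char_Poly"
begin

definition splitting :: "nat \<Rightarrow> real mat list \<Rightarrow> real mat \<Rightarrow> bool" where
  "splitting n Bs B \<longleftrightarrow>
     B \<in> carrier_mat n n \<and> Bs \<noteq> [] \<and>
     (\<forall>p < length Bs. Bs ! p \<in> carrier_mat n n \<and> Bs ! p \<noteq> 0\<^sub>m n n) \<and>
     foldr (+) Bs (0\<^sub>m n n) = B \<and>
     (\<forall>p < length Bs. \<forall>q < length Bs. p \<noteq> q \<longrightarrow>
        (\<forall>i < n. \<forall>j < n. (Bs ! p) $$ (i, j) * (Bs ! q) $$ (i, j) = 0))"

text \<open>Block matrices (d x d blocks of size n x n, 0-indexed blocks):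
  L_ij = B_j if i > j, U_ij = B_j if i \<le> j.\<close>
definition block_L :: "nat \<Rightarrow> 'a::zero mat list \<Rightarrow> 'a mat" where
  "block_L n Bs = mat (length Bs * n) (length Bs * n)
     (\<lambda>(r, c). if c div n < r div n then (Bs ! (c div n)) $$ (r mod n, c mod n) else 0)"

definition block_U :: "nat \<Rightarrow> 'a::zero mat list \<Rightarrow> 'a mat" where
  "block_U n Bs = mat (length Bs * n) (length Bs * n)
     (\<lambda>(r, c). if r div n \<le> c div n then (Bs ! (c div n)) $$ (r mod n, c mod n) else 0)"

text \<open>Iteration matrix T(B) = (I - L)^{-1} U  (I - L is unit block lower triangular,
  hence invertible, so mat_inverse returns Some).\<close>
definition iter_mat :: "nat \<Rightarrow> 'a::field mat list \<Rightarrow> 'a mat" where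
  "iter_mat n Bs = the (mat_inverse (1\<^sub>m (length Bs * n) - block_L n Bs)) * block_U n Bs"

definition cyc_shift :: "'a list \<Rightarrow> 'a list" where
  "cyc_shift Bs = last Bs # butlast Bs"

end

theory Submission imports Defs begin

lemma sum_group: fixes f :: "nat \<Rightarrow> 'a::comm_monoid_add" shows "(\<Sum>c<d*n. f c) = (\<Sum>j<d. \<Sum>l<n. f (j*n+l))"
proof -
  have "(\<Sum>c<d*n. f c) = (\<Sum>j<d. sum f {j*n..<j*n+n})" using sum.nat_group[of f n d] by simp
  also have "\<dots> = (\<Sum>j<d. \<Sum>l<n. f (j*n+l))"
  proof (rule sum.cong[OF refl])
    fix j
    show "sum f {j*n..<j*n+n} = (\<Sum>l<n. f (j*n+l))"
      using sum.shift_bounds_nat_ivl[of f 0 "j*n" n] by (simp add: lessThan_atLeast0 add.commute)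
  qed
  finally show ?thesis .
qed

lemma inv_ex:
  fixes Bs :: "'a::field mat list"
  shows "\<exists>Mi. mat_inverse (1\<^sub>m (length Bs * n) - block_L n Bs) = Some Mi \<and>
     Mi * (1\<^sub>m (length Bs * n) - block_L n Bs) = 1\<^sub>m (length Bs * n) \<and>
     (1\<^sub>m (length Bs * n) - block_L n Bs) * Mi = 1\<^sub>m (length Bs * n) \<and>
     Mi \<in> carrier_mat (length Bs * n) (length Bs * n)"
proof -
  define N where "N = length Bs * n"
  define M where "M = 1\<^sub>m N - block_L n Bs"
  have MC: "M \<in> carrier_mat N N" unfolding M_def block_L_def N_def by auto
  have low: "M $$ (i,j) = 0" if "i < j" "j < N" for i j
  proof -
    have "i div n \<le> j div n" using that by (simp add: div_le_mono)
    then show ?thesis using that unfolding M_def block_L_def N_def by auto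
  qed
  have diag: "M $$ (i,i) = 1" if "i < N" for i
    using that unfolding M_def block_L_def N_def by auto
  have "diag_mat M = replicate N 1"
    using MC diag unfolding diag_mat_def by (auto simp: list_eq_iff_nth_eq)
  hence "det M = 1" using det_lower_triangular[OF low MC] by (simp add: prod_list_replicate)
  hence "M \<in> Units (ring_mat TYPE('a) N N)" using det_non_zero_imp_unit[OF MC] by auto
  then obtain Mi where "mat_inverse M = Some Mi" by (metis mat_inverse(1)[OF MC] option.exhaust)
  then show ?thesis using mat_inverse(2)[OF MC] unfolding M_def N_def by blast
qed

lemma char:
  fixes Bs :: "real mat list" and v :: "complex vec"
  assumes vC: "v \<in> carrier_vec (length Bs * n)"
  shows "(map_mat complex_of_real (iter_mat n Bs) *\<^sub>v v = lam \<cdot>\<^sub>v v) \<longleftrightarrow>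
    (\<forall>i<length Bs. \<forall>k<n. lam * v$(i*n+k) =
       (\<Sum>j<length Bs. (if j<i then lam else 1) * (\<Sum>l<n. complex_of_real (Bs!j $$ (k,l)) * v$(j*n+l))))"
proof -
  define N where "N = length Bs * n"
  define M where "M = 1\<^sub>m N - block_L n Bs"
  define U where "U = block_U n Bs"
  obtain Mi where Mi: "mat_inverse M = Some Mi" "Mi * M = 1\<^sub>m N" "M * Mi = 1\<^sub>m N" "Mi \<in> carrier_mat N N"
    using inv_ex[of Bs n] unfolding M_def N_def by blast
  have MCar: "M \<in> carrier_mat N N" unfolding M_def block_L_def N_def by auto
  have UCar: "U \<in> carrier_mat N N" unfolding U_def block_U_def N_def by auto
  have T: "iter_mat n Bs = Mi * U" unfolding iter_mat_def using Mi(1) unfolding M_def N_def U_def by simp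
  define MC where "MC = map_mat complex_of_real M"
  define MiC where "MiC = map_mat complex_of_real Mi"
  define UC where "UC = map_mat complex_of_real U"
  have MCC: "MC \<in> carrier_mat N N" "MiC \<in> carrier_mat N N" "UC \<in> carrier_mat N N"
    using MCar Mi(4) UCar unfolding MC_def MiC_def UC_def by auto
  have TC: "map_mat complex_of_real (iter_mat n Bs) = MiC * UC"
    unfolding T MiC_def UC_def using of_real_hom.mat_hom_mult[OF Mi(4) UCar] by simp
  have MMi1: "MC * MiC = map_mat complex_of_real (M * Mi)"
    unfolding MC_def MiC_def by (rule of_real_hom.mat_hom_mult[OF MCar Mi(4), symmetric])
  have MMi2: "MiC * MC = map_mat complex_of_real (Mi * M)"
    unfolding MC_def MiC_def by (rule of_real_hom.mat_hom_mult[OF Mi(4) MCar, symmetric])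
  have MMi: "MC * MiC = 1\<^sub>m N" "MiC * MC = 1\<^sub>m N"
    unfolding MMi1 MMi2 Mi(2,3) by (rule of_real_hom.mat_hom_one)+
  have vN: "v \<in> carrier_vec N" using vC unfolding N_def .
  have step1: "(MiC * UC *\<^sub>v v = lam \<cdot>\<^sub>v v) \<longleftrightarrow> (UC *\<^sub>v v = lam \<cdot>\<^sub>v (MC *\<^sub>v v))"
  proof
    assume h: "MiC * UC *\<^sub>v v = lam \<cdot>\<^sub>v v"
    have "UC *\<^sub>v v = (MC * MiC) *\<^sub>v (UC *\<^sub>v v)" using MMi MCC vN by auto
    also have "\<dots> = MC *\<^sub>v ((MiC * UC) *\<^sub>v v)" using MCC vN
      by (simp add: assoc_mult_mat_vec)
    also have "\<dots> = lam \<cdot>\<^sub>v (MC *\<^sub>v v)" using h MCC vN by (simp add: mult_mat_vec)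
    finally show "UC *\<^sub>v v = lam \<cdot>\<^sub>v (MC *\<^sub>v v)" .
  next
    assume h: "UC *\<^sub>v v = lam \<cdot>\<^sub>v (MC *\<^sub>v v)"
    have "MiC * UC *\<^sub>v v = MiC *\<^sub>v (UC *\<^sub>v v)" using MCC vN by (simp add: assoc_mult_mat_vec)
    also have "\<dots> = lam \<cdot>\<^sub>v ((MiC * MC) *\<^sub>v v)" using h MCC vN
      by (simp add: mult_mat_vec assoc_mult_mat_vec)
    also have "\<dots> = lam \<cdot>\<^sub>v v" using MMi vN by simp
    finally show "MiC * UC *\<^sub>v v = lam \<cdot>\<^sub>v v" .
  qed
  define S where "S r = (\<Sum>c<N. (if c div n < r div n then lam else 1) *
      (complex_of_real (Bs!(c div n) $$ (r mod n, c mod n)) * v$c))" for r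
  have comp: "(UC *\<^sub>v v) $ r = lam * (MC *\<^sub>v v) $ r \<longleftrightarrow> lam * v$r = S r" if r: "r < N" for r
  proof -
    define L where "L = (\<Sum>c<N. (if c div n < r div n then complex_of_real (Bs!(c div n) $$ (r mod n, c mod n)) * v$c else 0))"
    define R where "R = (\<Sum>c<N. (if c div n < r div n then 0 else complex_of_real (Bs!(c div n) $$ (r mod n, c mod n)) * v$c))"
    have mv: "(A *\<^sub>v v)$r = (\<Sum>c<N. A$$(r,c) * v$c)" if "A \<in> carrier_mat N N" for A
      using that r vN by (auto simp: scalar_prod_def lessThan_atLeast0 intro!: sum.cong)
    have Uent: "UC $$ (r,c) = (if r div n \<le> c div n then complex_of_real (Bs!(c div n) $$ (r mod n, c mod n)) else 0)"
      if "c < N" for c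
      using that r UCar unfolding UC_def U_def block_U_def N_def by auto
    have Ment: "MC $$ (r,c) = (if r = c then 1 else 0) - (if c div n < r div n then complex_of_real (Bs!(c div n) $$ (r mod n, c mod n)) else 0)"
      if "c < N" for c
      using that r MCar unfolding MC_def M_def block_L_def N_def by auto
    have u: "(UC *\<^sub>v v) $ r = R"
      unfolding mv[OF MCC(3)] R_def using Uent by (auto intro!: sum.cong)
    have m1: "(MC *\<^sub>v v) $ r = (\<Sum>c<N. (if r = c then 1 else 0) * v$c) - L"
    proof -
      have "(\<Sum>c<N. MC$$(r,c) * v$c) = (\<Sum>c<N. (if r = c then 1 else 0) * v$c -
         (if c div n < r div n then complex_of_real (Bs!(c div n) $$ (r mod n, c mod n)) * v$c else 0))"
        by (rule sum.cong) (auto simp: Ment algebra_simps)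
      then show ?thesis unfolding mv[OF MCC(1)] L_def by (simp add: sum_subtractf)
    qed
    have "(\<Sum>c<N. (if r = c then 1 else 0) * v$c) = (\<Sum>c<N. if r = c then v$c else 0)"
      by (rule sum.cong) auto
    also have "\<dots> = v$r" using r by simp
    finally have "(\<Sum>c<N. (if r = c then 1 else 0) * v$c) = v$r" .
    hence m: "(MC *\<^sub>v v) $ r = v$r - L" using m1 by simp
    have s: "S r = lam * L + R" unfolding S_def L_def R_def
      by (auto simp: sum_distrib_left sum.distrib[symmetric] intro!: sum.cong)
    show ?thesis unfolding u m s by (auto simp: algebra_simps)
  qed
  have "(map_mat complex_of_real (iter_mat n Bs) *\<^sub>v v = lam \<cdot>\<^sub>v v) \<longleftrightarrow> (\<forall>r<N. lam * v$r = S r)"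
    unfolding TC step1 using MCC vN comp by (auto simp: vec_eq_iff)
  also have "\<dots> \<longleftrightarrow> (\<forall>i<length Bs. \<forall>k<n. lam * v$(i*n+k) = S (i*n+k))"
  proof
    assume h: "\<forall>r<N. lam * v$r = S r"
    show "\<forall>i<length Bs. \<forall>k<n. lam * v$(i*n+k) = S (i*n+k)"
    proof (intro allI impI)
      fix i k assume ik: "i < length Bs" "k < n"
      have "i*n+k < Suc i * n" using ik by simp
      also have "\<dots> \<le> length Bs * n" using ik by (intro mult_right_mono) auto
      finally show "lam * v$(i*n+k) = S (i*n+k)" using h unfolding N_def by blast
    qed
  next
    assume h: "\<forall>i<length Bs. \<forall>k<n. lam * v$(i*n+k) = S (i*n+k)"
    show "\<forall>r<N. lam * v$r = S r"
    proof (intro allI impI)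
      fix r assume r: "r < N"
      hence n: "n > 0" unfolding N_def by (cases n) auto
      have "r div n < length Bs" using r n unfolding N_def by (simp add: div_less_iff_less_mult)
      moreover have "r mod n < n" using n by simp
      ultimately show "lam * v$r = S r" using h by (metis div_mult_mod_eq)
    qed
  qed
  also have "\<dots> \<longleftrightarrow> (\<forall>i<length Bs. \<forall>k<n. lam * v$(i*n+k) =
       (\<Sum>j<length Bs. (if j<i then lam else 1) * (\<Sum>l<n. complex_of_real (Bs!j $$ (k,l)) * v$(j*n+l))))"
  proof -
    have "S (i*n+k) = (\<Sum>j<length Bs. (if j<i then lam else 1) * (\<Sum>l<n. complex_of_real (Bs!j $$ (k,l)) * v$(j*n+l)))"
      if "k < n" for i k
    proof -
      have n: "n > 0" using that by simp
      show ?thesis unfolding S_def N_def sum_group using that n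
        by (auto simp: sum_distrib_left intro!: sum.cong)
    qed
    then show ?thesis by auto
  qed
  finally show ?thesis .
qed

lemma iter_carrier: "iter_mat n Bs \<in> carrier_mat (length Bs * n) (length Bs * n)"
proof -
  obtain Mi where Mi: "mat_inverse (1\<^sub>m (length Bs * n) - block_L n Bs) = Some Mi"
     "Mi \<in> carrier_mat (length Bs * n) (length Bs * n)"
    using inv_ex[of Bs n] by metis
  have "iter_mat n Bs = Mi * block_U n Bs" unfolding iter_mat_def Mi(1) by simp
  moreover have "block_U n Bs \<in> carrier_mat (length Bs * n) (length Bs * n)" unfolding block_U_def by simp
  ultimately show ?thesis using Mi(2) by (metis mult_carrier_mat)
qed

theorem lemma2p1:
  fixes n :: nat and Bs :: "real mat list" and BJ :: "real mat"
    and v :: "complex vec" and lam :: complex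
  assumes "splitting n Bs BJ"
    and "lam \<noteq> 0"
    and "eigenvector (map_mat complex_of_real (iter_mat n Bs)) v lam"
  shows "eigenvalue (map_mat complex_of_real (iter_mat n (cyc_shift Bs))) lam \<and>
         eigenvector (map_mat complex_of_real (iter_mat n (cyc_shift Bs)))
           (vec (length Bs * n)
              (\<lambda>k. if k < n then v $ ((length Bs - 1) * n + k) else lam * v $ (k - n)))
           lam"
proof -
  have ne: "Bs \<noteq> []" using assms(1) unfolding splitting_def by blast
  define d where "d = length Bs"
  obtain e where e: "d = Suc e" using ne unfolding d_def by (cases Bs) auto
  have len: "length (cyc_shift Bs) = d" using ne unfolding cyc_shift_def d_def by auto
  define w where "w = vec (length Bs * n)
              (\<lambda>k. if k < n then v $ ((length Bs - 1) * n + k) else lam * v $ (k - n))"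
  have vC: "v \<in> carrier_vec (d * n)" and v0: "v \<noteq> 0\<^sub>v (d*n)"
   and ev: "map_mat complex_of_real (iter_mat n Bs) *\<^sub>v v = lam \<cdot>\<^sub>v v"
  proof -
    have dr: "dim_row (map_mat complex_of_real (iter_mat n Bs)) = d * n"
      using iter_carrier[of n Bs] unfolding d_def by simp
    show "v \<in> carrier_vec (d * n)" "v \<noteq> 0\<^sub>v (d*n)"
      "map_mat complex_of_real (iter_mat n Bs) *\<^sub>v v = lam \<cdot>\<^sub>v v"
      using assms(3) unfolding eigenvector_def dr by blast+
  qed
  have wC: "w \<in> carrier_vec (d * n)" unfolding w_def d_def by simp
  define g where "g j k = (\<Sum>l<n. complex_of_real (Bs!j $$ (k,l)) * v$(j*n+l))" for j k
  have E: "lam * v$(i*n+k) = (\<Sum>j<d. (if j<i then lam else 1) * g j k)" if "i < d" "k < n" for i k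
  proof -
    have "\<forall>i<length Bs. \<forall>k<n. lam * v$(i*n+k) =
       (\<Sum>j<length Bs. (if j<i then lam else 1) * (\<Sum>l<n. complex_of_real (Bs!j $$ (k,l)) * v$(j*n+l)))"
      using char[OF vC[unfolded d_def], THEN iffD1, OF ev] .
    then show ?thesis using that unfolding g_def d_def by blast
  qed
  have w0: "w $ l = v $ (e*n+l)" if "l < n" for l
  proof -
    have "l < d * n" using that e by simp
    then show ?thesis using that e unfolding w_def d_def by simp
  qed
  have wS: "w $ (Suc j * n + l) = lam * v $ (j*n+l)" if "j < e" "l < n" for j l
  proof -
    have "Suc j * n + l < Suc (Suc j) * n" using that by simp
    also have "\<dots> \<le> d * n" using that e by (intro mult_right_mono) auto
    finally have "Suc j * n + l < d * n" .
    then show ?thesis using that unfolding w_def d_def by simp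
  qed
  have c0: "cyc_shift Bs ! 0 = Bs ! e" using ne e unfolding cyc_shift_def d_def by (simp add: last_conv_nth)
  have cS: "cyc_shift Bs ! Suc j = Bs ! j" if "j < e" for j
    using ne e that unfolding cyc_shift_def d_def by (simp add: nth_butlast)
  define g' where "g' j k = (\<Sum>l<n. complex_of_real (cyc_shift Bs!j $$ (k,l)) * w$(j*n+l))" for j k
  have g'0: "g' 0 k = g e k" for k unfolding g'_def g_def c0 using w0 by (auto intro!: sum.cong)
  have g'S: "g' (Suc j) k = lam * g j k" if "j < e" for j k
    unfolding g'_def g_def cS[OF that] using wS[OF that] by (auto simp: sum_distrib_left intro!: sum.cong)
  have E': "lam * w$(i*n+k) = (\<Sum>j<d. (if j<i then lam else 1) * g' j k)" if "i < d" "k < n" for i k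
  proof (cases i)
    case 0
    have "lam * w$(i*n+k) = lam * v$(e*n+k)" using 0 w0 that by simp
    also have "\<dots> = (\<Sum>j<e. lam * g j k) + g e k" using E[of e k] that e by simp
    also have "\<dots> = (\<Sum>j<d. (if j<i then lam else 1) * g' j k)"
      unfolding e sum.lessThan_Suc_shift using 0 g'0 g'S by simp
    finally show ?thesis .
  next
    case (Suc i')
    have i': "i' < e" using Suc that e by simp
    have "lam * w$(i*n+k) = lam * (lam * v$(i'*n+k))" using Suc wS[OF i' that(2)] by simp
    also have "\<dots> = lam * ((\<Sum>j<e. (if j<i' then lam else 1) * g j k) + g e k)"
      using E[of i' k] that e i' by simp
    also have "\<dots> = (\<Sum>j<d. (if j<i then lam else 1) * g' j k)"
      unfolding e sum.lessThan_Suc_shift using Suc g'0 g'S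
      by (simp add: sum_distrib_left algebra_simps)
    finally show ?thesis .
  qed
  have ev': "map_mat complex_of_real (iter_mat n (cyc_shift Bs)) *\<^sub>v w = lam \<cdot>\<^sub>v w"
  proof (rule char[THEN iffD2])
    show "w \<in> carrier_vec (length (cyc_shift Bs) * n)" using wC len by simp
    show "\<forall>i<length (cyc_shift Bs). \<forall>k<n. lam * w $ (i * n + k) =
       (\<Sum>j<length (cyc_shift Bs). (if j < i then lam else 1) *
          (\<Sum>l<n. complex_of_real (cyc_shift Bs ! j $$ (k, l)) * w $ (j * n + l)))"
    proof (intro allI impI)
      fix i k assume ik: "i < length (cyc_shift Bs)" "k < n"
      show "lam * w $ (i * n + k) =
       (\<Sum>j<length (cyc_shift Bs). (if j < i then lam else 1) *
          (\<Sum>l<n. complex_of_real (cyc_shift Bs ! j $$ (k, l)) * w $ (j * n + l)))"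
        unfolding len using E'[OF ik[unfolded len], unfolded g'_def] .
    qed
  qed
  have w_ne: "w \<noteq> 0\<^sub>v (d*n)"
  proof
    assume wz: "w = 0\<^sub>v (d*n)"
    have "v = 0\<^sub>v (d*n)"
    proof (rule eq_vecI)
      show "dim_vec v = dim_vec (0\<^sub>v (d*n))" using vC by simp
      fix r assume "r < dim_vec (0\<^sub>v (d*n))"
      hence r: "r < d * n" by simp
      hence n: "n > 0" by (cases n) auto
      have i: "r div n < d" using r n by (simp add: div_less_iff_less_mult)
      have k: "r mod n < n" using n by simp
      have rr: "r div n * n + r mod n = r" by (rule div_mult_mod_eq)
      show "v $ r = 0\<^sub>v (d*n) $ r"
      proof (cases "r div n = e")
        case True
        have "w $ (r mod n) = 0" proof -
          have "r mod n < d * n" using k e by simp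
          then show ?thesis using wz by simp
        qed
        moreover have "v $ r = v $ (e*n + r mod n)" using rr True by simp
        ultimately show ?thesis using w0[OF k] r by simp
      next
        case False
        hence ie: "r div n < e" using i e by simp
        have "Suc (r div n) * n + r mod n < d * n"
        proof -
          have "Suc (r div n) * n + r mod n < Suc (Suc (r div n)) * n"
            unfolding mult_Suc using k by linarith
          also have "\<dots> \<le> d * n" using ie e by (intro mult_right_mono) auto
          finally show ?thesis .
        qed
        hence "w $ (Suc (r div n) * n + r mod n) = 0" using wz by simp
        moreover have "v $ r = v $ (r div n * n + r mod n)" using rr by simp
        ultimately show ?thesis using wS[OF ie k] assms(2) r by simp
      qed
    qed
    with v0 show False by simp
  qed
  have EV: "eigenvector (map_mat complex_of_real (iter_mat n (cyc_shift Bs))) w lam"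
    unfolding eigenvector_def using iter_carrier[of n "cyc_shift Bs"] len wC w_ne ev' by simp
  then show ?thesis unfolding w_def eigenvalue_def by blast
qed

end
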